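(* Let $M$ be a lattice surface and let $\varphi\in\mathrm{Aff}(M)$ satisfy $D\varphi=-\mathrm{Id}$. Then every fixed point of $\varphi$ is a periodic point of $M$.
   Context: $\mathrm{Aff}(M)$ is the group of affine automorphisms of the compact translation surface $M$ (homeomorphisms which are affine in charts, possibly orientation reversing), and $D:\mathrm{Aff}(M)\to\mathrm{GL}_2(\mathbb{R})$ maps an affine automorphism to its linear part. $M$ is a lattice surface if $D(\mathrm{Aff}(M))$ (the Veech group) is a lattice in $\mathrm{SL}_2(\mathbb{R})$. A point $p\in M$ is periodic if its $\mathrm{Aff}(M)$-orbit is finite. *)

theory Defs
  imports "HOL-Analysis.Analysis"
begin

text \<open>The surface is the whole (Hausdorff) type 'a.
  Sigma is the finite set of cone points (possibly including marked points
  of cone angle 2 pi), A is a translation atlas of M - Sigma with charts into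
  the complex plane (identified with R^2).\<close>

definition translation_atlas ::
  "'a::topological_space set \<Rightarrow> ('a set \<times> ('a \<Rightarrow> complex)) set \<Rightarrow> bool" where
  "translation_atlas S A \<longleftrightarrow>
     (\<forall>(U,f)\<in>A. open U \<and> U \<inter> S = {} \<and> open (f ` U) \<and>
                 (\<exists>g. homeomorphism U (f ` U) f g)) \<and>
     \<Union>(fst ` A) = UNIV - S \<and>
     (\<forall>(U,f)\<in>A. \<forall>(V,g)\<in>A. \<forall>x\<in>U \<inter> V.
        \<exists>W. open W \<and> x \<in> W \<and> W \<subseteq> U \<inter> V \<and> (\<exists>c. \<forall>y\<in>W. g y = f y + c)) \<and>
     (\<forall>s\<in>S. \<exists>V \<psi> \<psi>' (k::nat) r.
        open V \<and> s \<in> V \<and> V \<inter> S = {s} \<and> k \<ge> 1 \<and> r > 0 \<and>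
        homeomorphism V (ball 0 r) \<psi> \<psi>' \<and> \<psi> s = 0 \<and>
        (\<forall>(U,f)\<in>A. \<forall>x\<in>U \<inter> V.
           \<exists>W. open W \<and> x \<in> W \<and> W \<subseteq> U \<inter> V \<and> (\<exists>c. \<forall>y\<in>W. f y = (\<psi> y) ^ k + c)))"

definition translation_surface ::
  "'a::t2_space set \<Rightarrow> ('a set \<times> ('a \<Rightarrow> complex)) set \<Rightarrow> bool" where
  "translation_surface S A \<longleftrightarrow>
     compact (UNIV :: 'a set) \<and> connected (UNIV :: 'a set) \<and>
     finite S \<and> S \<noteq> {} \<and> translation_atlas S A"

definition mat_app :: "real^2^2 \<Rightarrow> complex \<Rightarrow> complex" where
  "mat_app L z = Complex (L$1$1 * Re z + L$1$2 * Im z) (L$2$1 * Re z + L$2$2 * Im z)"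

definition affine_aut_with ::
  "'a::topological_space set \<Rightarrow> ('a set \<times> ('a \<Rightarrow> complex)) set \<Rightarrow> ('a \<Rightarrow> 'a) \<Rightarrow> real^2^2 \<Rightarrow> bool" where
  "affine_aut_with S A \<phi> L \<longleftrightarrow>
     (\<exists>\<phi>'. homeomorphism UNIV UNIV \<phi> \<phi>') \<and> \<phi> ` S = S \<and> invertible L \<and>
     (\<forall>(U,f)\<in>A. \<forall>(V,g)\<in>A. \<forall>x\<in>U. \<phi> x \<in> V \<longrightarrow>
        (\<exists>W. open W \<and> x \<in> W \<and> W \<subseteq> U \<and> \<phi> ` W \<subseteq> V \<and>
             (\<exists>c. \<forall>y\<in>W. g (\<phi> y) = mat_app L (f y) + c)))"

definition Aff :: "'a::topological_space set \<Rightarrow> ('a set \<times> ('a \<Rightarrow> complex)) set \<Rightarrow> ('a \<Rightarrow> 'a) set" where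
  "Aff S A = {\<phi>. \<exists>L. affine_aut_with S A \<phi> L}"

definition veech_group :: "'a::topological_space set \<Rightarrow> ('a set \<times> ('a \<Rightarrow> complex)) set \<Rightarrow> (real^2^2) set" where
  "veech_group S A = {L. (\<exists>\<phi>. affine_aut_with S A \<phi> L) \<and> det L = 1}"

definition moebius_act :: "real^2^2 \<Rightarrow> complex \<Rightarrow> complex" where
  "moebius_act g z = (of_real (g$1$1) * z + of_real (g$1$2)) / (of_real (g$2$1) * z + of_real (g$2$2))"

definition upper_half_plane :: "complex set" where
  "upper_half_plane = {z. Im z > 0}"

text \<open>A lattice in SL(2,R): a discrete subgroup whose quotient of the hyperbolic
  plane has finite hyperbolic area (equivalently, finite Haar covolume).\<close>
definition is_lattice_SL2 :: "(real^2^2) set \<Rightarrow> bool" where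
  "is_lattice_SL2 \<Gamma> \<longleftrightarrow>
     (\<forall>g\<in>\<Gamma>. det g = 1) \<and> mat 1 \<in> \<Gamma> \<and>
     (\<forall>g\<in>\<Gamma>. \<forall>h\<in>\<Gamma>. g ** h \<in> \<Gamma>) \<and> (\<forall>g\<in>\<Gamma>. matrix_inv g \<in> \<Gamma>) \<and>
     (\<forall>g\<in>\<Gamma>. \<exists>e>0. \<forall>h\<in>\<Gamma>. dist g h < e \<longrightarrow> h = g) \<and>
     (\<exists>F. F \<in> sets lebesgue \<and> F \<subseteq> upper_half_plane \<and>
          (\<Union>g\<in>\<Gamma>. moebius_act g ` F) = upper_half_plane \<and>
          (\<integral>\<^sup>+ z. indicator F z * ennreal (1 / (Im z)\<^sup>2) \<partial>lebesgue) < \<infinity>)"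

definition lattice_surface :: "'a::t2_space set \<Rightarrow> ('a set \<times> ('a \<Rightarrow> complex)) set \<Rightarrow> bool" where
  "lattice_surface S A \<longleftrightarrow> translation_surface S A \<and> is_lattice_SL2 (veech_group S A)"

definition periodic_point :: "'a::topological_space set \<Rightarrow> ('a set \<times> ('a \<Rightarrow> complex)) set \<Rightarrow> 'a \<Rightarrow> bool" where
  "periodic_point S A p \<longleftrightarrow> finite {\<phi> p | \<phi>. \<phi> \<in> Aff S A}"

end

theory Submission
  imports Defs
begin

lemma mat_app_mult: "mat_app (A ** B) z = mat_app A (mat_app B z)"
  by (simp add: mat_app_def matrix_matrix_mult_def sum_2 complex_eq_iff algebra_simps)

lemma mat_app_one[simp]: "mat_app (mat 1) z = z"
  by (simp add: mat_app_def mat_def complex_eq_iff)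

lemma mat_app_neg_one[simp]: "mat_app (- mat 1) z = - z"
  by (simp add: mat_app_def mat_def complex_eq_iff)

lemma mat_app_add: "mat_app L (a + b) = mat_app L a + mat_app L b"
  by (simp add: mat_app_def complex_eq_iff algebra_simps)

lemma mat_app_minus: "mat_app L (- a) = - mat_app L a"
  by (simp add: mat_app_def complex_eq_iff algebra_simps)

lemma mat_app_diff: "mat_app L (a - b) = mat_app L a - mat_app L b"
  by (simp add: mat_app_def complex_eq_iff algebra_simps)

lemma mul_neg_one: "(A::real^2^2) ** (- mat 1) = - A"
  by (simp add: matrix_matrix_mult_def mat_def vec_eq_iff sum_2 forall_2)

lemma neg_mul: "(- A::real^2^2) ** B = - (A ** B)"
  by (simp add: matrix_matrix_mult_def vec_eq_iff sum_negf)

lemma mul_neg: "(A::real^2^2) ** (- B) = - (A ** B)"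
  by (simp add: matrix_matrix_mult_def vec_eq_iff sum_negf)

lemma neg_conj: "(A::real^2^2) ** (A'::real^2^2) = mat 1 \<Longrightarrow> A ** ((- mat 1) ** A') = (- mat 1 :: real^2^2)"
proof -
  have "(- mat 1) ** A' = - A'" by (subst neg_mul) (simp add: matrix_mul_lid)
  then show "A ** A' = mat 1 \<Longrightarrow> A ** ((- mat 1) ** A') = (- mat 1 :: real^2^2)"
    by (simp add: mul_neg)
qed

section \<open>Affine automorphisms: composition and inverse\<close>

lemma open_vimage_UNIV: "continuous_on UNIV f \<Longrightarrow> open B \<Longrightarrow> open (f -` B)"
  using continuous_on_open_vimage[of UNIV f] by auto

lemma aff_nonsing:
  assumes "affine_aut_with S A f L" "x \<notin> S" shows "f x \<notin> S"
proof
  assume "f x \<in> S"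
  from assms(1) obtain f' where h: "homeomorphism UNIV UNIV f f'" and fS: "f ` S = S"
    unfolding affine_aut_with_def by blast
  from \<open>f x \<in> S\<close> fS obtain s where "s \<in> S" "f s = f x" by (metis imageE)
  then have "s = x" using h by (metis homeomorphism_apply1 UNIV_I)
  then show False using assms(2) \<open>s \<in> S\<close> by simp
qed

lemma atlas_cover:
  assumes "translation_atlas S A" "x \<notin> S"
  obtains U f where "(U,f) \<in> A" "x \<in> U"
proof -
  have "\<Union>(fst ` A) = UNIV - S" using assms(1) unfolding translation_atlas_def by (elim conjE)
  then have "x \<in> \<Union>(fst ` A)" using assms(2) by blast
  then show ?thesis using that by force
qed

lemma atlas_chart:
  assumes "translation_atlas S A" "(U,f) \<in> A"
  shows "open U \<and> U \<inter> S = {} \<and> open (f ` U) \<and> (\<exists>g. homeomorphism U (f ` U) f g)"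
proof -
  have "\<forall>(U,f)\<in>A. open U \<and> U \<inter> S = {} \<and> open (f ` U) \<and> (\<exists>g. homeomorphism U (f ` U) f g)"
    using assms(1) unfolding translation_atlas_def by (elim conjE)
  then show ?thesis using assms(2) by auto
qed

lemma atlas_chart_disj:
  assumes "translation_atlas S A" "(U,f) \<in> A" "x \<in> U" shows "x \<notin> S"
  using atlas_chart[OF assms(1,2)] assms(3) by blast

lemma aff_local:
  assumes "affine_aut_with S A \<phi> L" "(U,f) \<in> A" "(V,g) \<in> A" "x \<in> U" "\<phi> x \<in> V"
  shows "\<exists>W. open W \<and> x \<in> W \<and> W \<subseteq> U \<and> \<phi> ` W \<subseteq> V \<and>
             (\<exists>c. \<forall>y\<in>W. g (\<phi> y) = mat_app L (f y) + c)"
proof -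
  have "\<forall>(U,f)\<in>A. \<forall>(V,g)\<in>A. \<forall>x\<in>U. \<phi> x \<in> V \<longrightarrow>
        (\<exists>W. open W \<and> x \<in> W \<and> W \<subseteq> U \<and> \<phi> ` W \<subseteq> V \<and>
             (\<exists>c. \<forall>y\<in>W. g (\<phi> y) = mat_app L (f y) + c))"
    using assms(1) unfolding affine_aut_with_def by (elim conjE)
  then have "\<forall>(V,g)\<in>A. \<forall>x\<in>U. \<phi> x \<in> V \<longrightarrow>
        (\<exists>W. open W \<and> x \<in> W \<and> W \<subseteq> U \<and> \<phi> ` W \<subseteq> V \<and>
             (\<exists>c. \<forall>y\<in>W. g (\<phi> y) = mat_app L (f y) + c))"
    using assms(2) by (drule_tac bspec) auto
  then have "\<forall>x\<in>U. \<phi> x \<in> V \<longrightarrow>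
        (\<exists>W. open W \<and> x \<in> W \<and> W \<subseteq> U \<and> \<phi> ` W \<subseteq> V \<and>
             (\<exists>c. \<forall>y\<in>W. g (\<phi> y) = mat_app L (f y) + c))"
    using assms(3) by (drule_tac bspec) auto
  then show ?thesis using assms(4,5) by blast
qed
lemma aff_intro:
  assumes "homeomorphism UNIV UNIV \<phi> \<phi>'" "\<phi> ` S = S" "invertible L"
    "\<And>U f V g x. (U,f) \<in> A \<Longrightarrow> (V,g) \<in> A \<Longrightarrow> x \<in> U \<Longrightarrow> \<phi> x \<in> V \<Longrightarrow>
      \<exists>W. open W \<and> x \<in> W \<and> W \<subseteq> U \<and> \<phi> ` W \<subseteq> V \<and>
             (\<exists>c. \<forall>y\<in>W. g (\<phi> y) = mat_app L (f y) + c)"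
  shows "affine_aut_with S A \<phi> L"
  unfolding affine_aut_with_def
proof (intro conjI)
  show "\<exists>\<phi>'. homeomorphism UNIV UNIV \<phi> \<phi>'" using assms(1) by blast
  show "\<forall>(U,f)\<in>A. \<forall>(V,g)\<in>A. \<forall>x\<in>U. \<phi> x \<in> V \<longrightarrow>
        (\<exists>W. open W \<and> x \<in> W \<and> W \<subseteq> U \<and> \<phi> ` W \<subseteq> V \<and>
             (\<exists>c. \<forall>y\<in>W. g (\<phi> y) = mat_app L (f y) + c))"
    using assms(4) by (intro ballI impI) (auto simp: case_prod_beta)
qed (use assms in auto)

lemma aff_comp:
  assumes at: "translation_atlas S A"
    and a1: "affine_aut_with S A f L1" and a2: "affine_aut_with S A g L2"
  shows "affine_aut_with S A (g \<circ> f) (L2 ** L1)"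
proof -
  from a1 obtain f' where hf: "homeomorphism UNIV UNIV f f'" and fS: "f ` S = S" and i1: "invertible L1"
    unfolding affine_aut_with_def by blast
  from a2 obtain g' where hg: "homeomorphism UNIV UNIV g g'" and gS: "g ` S = S" and i2: "invertible L2"
    unfolding affine_aut_with_def by blast
  have contf: "continuous_on UNIV f" using hf by (simp add: homeomorphism_def)
  have loc: "\<exists>W. open W \<and> x \<in> W \<and> W \<subseteq> U \<and> (g \<circ> f) ` W \<subseteq> V \<and>
             (\<exists>c. \<forall>y\<in>W. k ((g \<circ> f) y) = mat_app (L2 ** L1) (h y) + c)"
    if UA: "(U,h) \<in> A" and VA: "(V,k) \<in> A" and xU: "x \<in> U" and gfx: "(g \<circ> f) x \<in> V" for U h V k x
  proof -
    have "x \<notin> S" using atlas_chart_disj[OF at UA xU] .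
    then have "f x \<notin> S" using aff_nonsing[OF a1] by blast
    then obtain U1 h1 where U1A: "(U1,h1) \<in> A" and fxU1: "f x \<in> U1" using atlas_cover[OF at] by blast
    from aff_local[OF a2 U1A VA fxU1] gfx obtain W2 c2' where W2: "open W2" "f x \<in> W2" "W2 \<subseteq> U1" "g ` W2 \<subseteq> V"
      and e2: "\<forall>y\<in>W2. k (g y) = mat_app L2 (h1 y) + c2'" by auto
    from aff_local[OF a1 UA U1A xU fxU1] obtain W1 c1' where W1: "open W1" "x \<in> W1" "W1 \<subseteq> U" "f ` W1 \<subseteq> U1"
      and e1: "\<forall>y\<in>W1. h1 (f y) = mat_app L1 (h y) + c1'" by auto
    define W where "W = W1 \<inter> f -` W2"
    have "open W" unfolding W_def using W1(1) W2(1) open_vimage_UNIV[OF contf] by blast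
    moreover have "x \<in> W" using W1 W2 unfolding W_def by blast
    moreover have "W \<subseteq> U" using W1 unfolding W_def by blast
    moreover have "(g \<circ> f) ` W \<subseteq> V" using W2 unfolding W_def by auto
    moreover have "\<forall>y\<in>W. k ((g \<circ> f) y) = mat_app (L2 ** L1) (h y) + (mat_app L2 c1' + c2')"
      using e1 e2 unfolding W_def by (auto simp: mat_app_mult mat_app_add)
    ultimately show ?thesis by blast
  qed
  have h: "homeomorphism UNIV UNIV (g \<circ> f) (f' \<circ> g')"
    using homeomorphism_compose[OF hf hg] .
  have im: "(g \<circ> f) ` S = S" using fS gS by (metis image_comp)
  have inv: "invertible (L2 ** L1)" using i1 i2 by (simp add: invertible_mult)
  show ?thesis by (rule aff_intro[OF h im inv loc])
qed

lemma aff_inv: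
  assumes at: "translation_atlas S A"
    and a1: "affine_aut_with S A f L" and hf: "homeomorphism UNIV UNIV f f'"
    and LL: "L' ** L = mat 1" "L ** L' = mat 1"
  shows "affine_aut_with S A f' L'"
proof -
  from a1 have fS: "f ` S = S"
    unfolding affine_aut_with_def by blast
  have ff': "\<And>y. f (f' y) = y" and f'f: "\<And>y. f' (f y) = y"
    using hf by (auto simp: homeomorphism_def)
  have contf': "continuous_on UNIV f'" using hf by (simp add: homeomorphism_def)
  have loc: "\<exists>W. open W \<and> x \<in> W \<and> W \<subseteq> U \<and> f' ` W \<subseteq> V \<and>
             (\<exists>c. \<forall>y\<in>W. k (f' y) = mat_app L' (h y) + c)"
    if UA: "(U,h) \<in> A" and VA: "(V,k) \<in> A" and xU: "x \<in> U" and fx: "f' x \<in> V" for U h V k x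
  proof -
    have "f (f' x) \<in> U" using xU ff' by simp
    from aff_local[OF a1 VA UA fx this] obtain W1 c where W1: "open W1" "f' x \<in> W1" "W1 \<subseteq> V" "f ` W1 \<subseteq> U"
      and e1: "\<forall>y\<in>W1. h (f y) = mat_app L (k y) + c" by auto
    define W where "W = f' -` W1"
    have "open W" unfolding W_def using W1(1) open_vimage_UNIV[OF contf'] by blast
    moreover have "x \<in> W" using W1 unfolding W_def by blast
    moreover have "W \<subseteq> U"
    proof
      fix y assume "y \<in> W"
      then have "f (f' y) \<in> U" using W1(4) unfolding W_def by blast
      then show "y \<in> U" using ff' by simp
    qed
    moreover have "f' ` W \<subseteq> V" using W1 unfolding W_def by auto
    moreover have "\<forall>y\<in>W. k (f' y) = mat_app L' (h y) + (- mat_app L' c)"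
    proof
      fix y assume "y \<in> W"
      then have "f' y \<in> W1" unfolding W_def by simp
      then have "h (f (f' y)) = mat_app L (k (f' y)) + c" using e1 by blast
      then have "h y = mat_app L (k (f' y)) + c" using ff' by simp
      then have "mat_app L' (h y) = mat_app L' (mat_app L (k (f' y))) + mat_app L' c"
        by (simp add: mat_app_add)
      also have "mat_app L' (mat_app L (k (f' y))) = k (f' y)"
        by (simp add: mat_app_mult[symmetric] LL)
      finally have "mat_app L' (h y) = k (f' y) + mat_app L' c" .
      then show "k (f' y) = mat_app L' (h y) + (- mat_app L' c)" by simp
    qed
    ultimately show ?thesis by blast
  qed
  have h: "homeomorphism UNIV UNIV f' f" using homeomorphism_symD[OF hf] .
  have im: "f' ` S = S"
  proof -
    have "f' ` S = f' ` (f ` S)" using fS by simp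
    also have "\<dots> = S" by (simp add: image_comp f'f)
    finally show ?thesis .
  qed
  have inv: "invertible L'" using LL unfolding invertible_def by blast
  show ?thesis by (rule aff_intro[OF h im inv loc])
qed

section \<open>Singular charts\<close>

definition schart :: "'a::topological_space set \<Rightarrow> ('a set \<times> ('a \<Rightarrow> complex)) set \<Rightarrow> 'a \<Rightarrow> 'a set
   \<Rightarrow> ('a \<Rightarrow> complex) \<Rightarrow> (complex \<Rightarrow> 'a) \<Rightarrow> nat \<Rightarrow> real \<Rightarrow> bool" where
  "schart S A s V \<psi> \<psi>' k r \<longleftrightarrow>
        open V \<and> s \<in> V \<and> V \<inter> S = {s} \<and> k \<ge> 1 \<and> r > 0 \<and>
        homeomorphism V (ball 0 r) \<psi> \<psi>' \<and> \<psi> s = 0 \<and>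
        (\<forall>(U,f)\<in>A. \<forall>x\<in>U \<inter> V.
           \<exists>W. open W \<and> x \<in> W \<and> W \<subseteq> U \<inter> V \<and> (\<exists>c. \<forall>y\<in>W. f y = (\<psi> y) ^ k + c))"

lemma schart_ex:
  assumes "translation_atlas S A" "s \<in> S"
  shows "\<exists>V \<psi> \<psi>' k r. schart S A s V \<psi> \<psi>' k r"
proof -
  have "\<forall>s\<in>S. \<exists>V \<psi> \<psi>' (k::nat) r.
        open V \<and> s \<in> V \<and> V \<inter> S = {s} \<and> k \<ge> 1 \<and> r > 0 \<and>
        homeomorphism V (ball 0 r) \<psi> \<psi>' \<and> \<psi> s = 0 \<and>
        (\<forall>(U,f)\<in>A. \<forall>x\<in>U \<inter> V.
           \<exists>W. open W \<and> x \<in> W \<and> W \<subseteq> U \<inter> V \<and> (\<exists>c. \<forall>y\<in>W. f y = (\<psi> y) ^ k + c))"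
    using assms(1) unfolding translation_atlas_def by (elim conjE)
  then have "\<exists>V \<psi> \<psi>' (k::nat) r.
        open V \<and> s \<in> V \<and> V \<inter> S = {s} \<and> k \<ge> 1 \<and> r > 0 \<and>
        homeomorphism V (ball 0 r) \<psi> \<psi>' \<and> \<psi> s = 0 \<and>
        (\<forall>(U,f)\<in>A. \<forall>x\<in>U \<inter> V.
           \<exists>W. open W \<and> x \<in> W \<and> W \<subseteq> U \<inter> V \<and> (\<exists>c. \<forall>y\<in>W. f y = (\<psi> y) ^ k + c))"
    using assms(2) by (rule bspec)
  then show ?thesis unfolding schart_def .
qed

context
  fixes S A s V \<psi> \<psi>' k r
  assumes sc: "schart S A s V \<psi> \<psi>' k r"
begin

lemma sc_open: "open V" using sc by (simp add: schart_def)
lemma sc_s: "s \<in> V" using sc by (simp add: schart_def)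
lemma sc_S: "V \<inter> S = {s}" using sc by (simp add: schart_def)
lemma sc_k: "k \<ge> 1" using sc by (simp add: schart_def)
lemma sc_r: "r > 0" using sc by (simp add: schart_def)
lemma sc_h: "homeomorphism V (ball 0 r) \<psi> \<psi>'" using sc by (simp add: schart_def)
lemma sc_0: "\<psi> s = 0" using sc by (simp add: schart_def)

lemma sc_local:
  assumes "(U,f) \<in> A" "x \<in> U" "x \<in> V"
  shows "\<exists>W. open W \<and> x \<in> W \<and> W \<subseteq> U \<inter> V \<and> (\<exists>c. \<forall>y\<in>W. f y = (\<psi> y) ^ k + c)"
proof -
  have "\<forall>(U,f)\<in>A. \<forall>x\<in>U \<inter> V.
           \<exists>W. open W \<and> x \<in> W \<and> W \<subseteq> U \<inter> V \<and> (\<exists>c. \<forall>y\<in>W. f y = (\<psi> y) ^ k + c)"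
    using sc unfolding schart_def by (elim conjE)
  then show ?thesis using assms by auto
qed

lemma sc_psi_in: "x \<in> V \<Longrightarrow> \<psi> x \<in> ball 0 r"
  using sc_h by (auto simp: homeomorphism_def)
lemma sc_inv_in: "w \<in> ball 0 r \<Longrightarrow> \<psi>' w \<in> V"
  using sc_h by (auto simp: homeomorphism_def)
lemma sc_inv1: "x \<in> V \<Longrightarrow> \<psi>' (\<psi> x) = x"
  using sc_h by (auto simp: homeomorphism_def)
lemma sc_inv2: "w \<in> ball 0 r \<Longrightarrow> \<psi> (\<psi>' w) = w"
  using sc_h by (auto simp: homeomorphism_def)
lemma sc_cont: "continuous_on V \<psi>"
  using sc_h by (auto simp: homeomorphism_def)
lemma sc_cont': "continuous_on (ball 0 r) \<psi>'"
  using sc_h by (auto simp: homeomorphism_def)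
lemma sc_inv0: "\<psi>' 0 = s"
  using sc_inv1[OF sc_s] sc_0 by simp

lemma sc_punct_eq:
  assumes "R \<le> r"
  shows "\<psi>' ` (ball 0 R - {0}) = {y \<in> V. norm (\<psi> y) < R} - {s}"
proof
  show "\<psi>' ` (ball 0 R - {0}) \<subseteq> {y \<in> V. norm (\<psi> y) < R} - {s}"
  proof
    fix y assume "y \<in> \<psi>' ` (ball 0 R - {0})"
    then obtain w where w: "w \<in> ball 0 R" "w \<noteq> 0" "y = \<psi>' w" by blast
    have wr: "w \<in> ball 0 r" using w assms by auto
    have "\<psi> y = w" using sc_inv2[OF wr] w by simp
    moreover have "y \<in> V" using sc_inv_in[OF wr] w by simp
    moreover have "y \<noteq> s" using \<open>\<psi> y = w\<close> w(2) sc_0 by auto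
    ultimately show "y \<in> {y \<in> V. norm (\<psi> y) < R} - {s}" using w by auto
  qed
  show "{y \<in> V. norm (\<psi> y) < R} - {s} \<subseteq> \<psi>' ` (ball 0 R - {0})"
  proof
    fix y assume y: "y \<in> {y \<in> V. norm (\<psi> y) < R} - {s}"
    then have "\<psi> y \<noteq> 0" using sc_inv1 sc_inv0 by (metis DiffE insertI1 mem_Collect_eq)
    moreover have "y = \<psi>' (\<psi> y)" using y sc_inv1 by auto
    ultimately show "y \<in> \<psi>' ` (ball 0 R - {0})" using y by auto
  qed
qed

lemma sc_punct_conn:
  assumes "R \<le> r"
  shows "connected ({y \<in> V. norm (\<psi> y) < R} - {s})"
proof -
  have "connected (ball (0::complex) R - {0})" by (rule connected_punctured_ball) simp
  moreover have "continuous_on (ball 0 R - {0}) \<psi>'"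
    by (rule continuous_on_subset[OF sc_cont']) (use assms in auto)
  ultimately have "connected (\<psi>' ` (ball 0 R - {0}))" by (rule connected_continuous_image[rotated])
  then show ?thesis using sc_punct_eq[OF assms] by simp
qed

lemma sc_small_open:
  shows "open {y \<in> V. norm (\<psi> y) < R}"
proof -
  have "open (\<psi> -` ball 0 R \<inter> V)"
    using continuous_on_open_vimage[OF sc_open] sc_cont by blast
  moreover have "\<psi> -` ball 0 R \<inter> V = {y \<in> V. norm (\<psi> y) < R}" by auto
  ultimately show ?thesis by simp
qed

lemma sc_nonisolated:
  assumes "open Q" "s \<in> Q" "0 < R"
  shows "\<exists>y. y \<in> Q \<inter> V \<and> y \<noteq> s \<and> norm (\<psi> y) < R"
proof -
  have "open (\<psi>' -` (Q \<inter> V) \<inter> ball 0 r)"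
    using continuous_on_open_vimage[of "ball 0 r" \<psi>'] sc_cont' assms(1) sc_open by blast
  moreover have "0 \<in> \<psi>' -` (Q \<inter> V) \<inter> ball 0 r" using sc_inv0 assms sc_s sc_r by auto
  ultimately obtain e where e: "e > 0" "ball 0 e \<subseteq> \<psi>' -` (Q \<inter> V) \<inter> ball 0 r"
    by (meson open_contains_ball)
  define w :: complex where "w = of_real (min e R / 2)"
  have wn: "norm w = min e R / 2" using e assms unfolding w_def by simp
  have w0: "w \<noteq> 0" using e assms unfolding w_def by simp
  have "w \<in> ball 0 e" using wn e assms by simp
  then have wO: "\<psi>' w \<in> Q \<inter> V" and wr: "w \<in> ball 0 r" using e by auto
  have "\<psi> (\<psi>' w) = w" using sc_inv2[OF wr] .
  then show ?thesis using wO w0 wn sc_0 e assms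
    by (intro exI[of _ "\<psi>' w"]) auto
qed

end

section \<open>Rigidity of translations\<close>

lemma aff_homeo:
  assumes "affine_aut_with S A f L"
  obtains f' where "homeomorphism UNIV UNIV f f'"
  using assms unfolding affine_aut_with_def by blast

lemma aff_cont: "affine_aut_with S A f L \<Longrightarrow> continuous_on UNIV f"
  by (metis aff_homeo homeomorphism_def)

lemma chart_inj:
  assumes "translation_atlas S A" "(U,f) \<in> A" "x \<in> U" "y \<in> U" "f x = f y"
  shows "x = y"
proof -
  obtain g where "homeomorphism U (f ` U) f g" using atlas_chart[OF assms(1,2)] by blast
  then show ?thesis using assms(3-5) by (metis homeomorphism_apply1)
qed

lemma transl_local:
  assumes at: "translation_atlas S A" and a: "affine_aut_with S A \<tau> (mat 1)" and aS: "(a::'a::t2_space) \<notin> S"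
  shows "\<exists>T. open T \<and> a \<in> T \<and> (\<forall>x\<in>T. \<forall>y\<in>T. \<tau> x = x \<longrightarrow> \<tau> y = y)"
proof (cases "\<tau> a = a")
  case False
  obtain O1 O2 where O: "open O1" "open O2" "a \<in> O1" "\<tau> a \<in> O2" "O1 \<inter> O2 = {}"
    using hausdorff[of a "\<tau> a"] False by metis
  define T where "T = O1 \<inter> \<tau> -` O2"
  have "open T" unfolding T_def using O open_vimage_UNIV[OF aff_cont[OF a]] by blast
  moreover have "a \<in> T" using O unfolding T_def by blast
  moreover have "\<forall>x\<in>T. \<tau> x \<noteq> x" using O unfolding T_def by auto
  ultimately show ?thesis by blast
next
  case True
  obtain U f where UA: "(U,f) \<in> A" and aU: "a \<in> U" using atlas_cover[OF at aS] by blast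
  from aff_local[OF a UA UA aU] True aU obtain W c where W: "open W" "a \<in> W" "W \<subseteq> U" "\<tau> ` W \<subseteq> U"
    and e: "\<forall>y\<in>W. f (\<tau> y) = f y + c" by auto
  have "\<tau> y = y" if "x \<in> W" "y \<in> W" "\<tau> x = x" for x y
  proof -
    have "f x = f x + c" using e that by metis
    then have c0: "c = 0" by simp
    have "f (\<tau> y) = f y" using e that c0 by simp
    then show ?thesis using chart_inj[OF at UA] W that by blast
  qed
  then show ?thesis using W by blast
qed

lemma rigidity:
  assumes ts: "translation_surface S A" and a: "affine_aut_with S A \<tau> (mat 1)"
    and y0: "y0 \<notin> S" "\<tau> y0 = y0"
  shows "\<tau> x = x"
proof -
  have at: "translation_atlas S A" and conn: "connected (UNIV::'a set)"
    using ts unfolding translation_surface_def by blast+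
  define E where "E = interior {x. \<tau> x = x}"
  have EF: "\<And>x. x \<in> E \<Longrightarrow> \<tau> x = x" unfolding E_def using interior_subset by blast
  have Eopen: "open E" unfolding E_def by simp
  have sub: "\<And>T. open T \<Longrightarrow> (\<forall>y\<in>T. \<tau> y = y) \<Longrightarrow> T \<subseteq> E"
    unfolding E_def by (rule interior_maximal) auto
  have y0E: "y0 \<in> E"
  proof -
    obtain T where T: "open T" "y0 \<in> T" "\<forall>x\<in>T. \<forall>y\<in>T. \<tau> x = x \<longrightarrow> \<tau> y = y"
      using transl_local[OF at a y0(1)] by blast
    then have "T \<subseteq> E" using sub y0(2) by blast
    then show ?thesis using T by blast
  qed
  have "x \<in> E"
  proof (rule connected_induction_simple[OF conn, of y0 x "\<lambda>x. x \<in> E"])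
    fix b :: 'a
    show "\<exists>T. openin (top_of_set UNIV) T \<and> b \<in> T \<and> (\<forall>x\<in>T. \<forall>y\<in>T. x \<in> E \<longrightarrow> y \<in> E)"
    proof (cases "b \<in> S")
      case False
      obtain T where T: "open T" "b \<in> T" "\<forall>x\<in>T. \<forall>y\<in>T. \<tau> x = x \<longrightarrow> \<tau> y = y"
        using transl_local[OF at a False] by blast
      have "\<forall>x\<in>T. \<forall>y\<in>T. x \<in> E \<longrightarrow> y \<in> E"
      proof (intro ballI impI)
        fix x y assume "x \<in> T" "y \<in> T" "x \<in> E"
        then have "\<forall>y\<in>T. \<tau> y = y" using T EF by blast
        then have "T \<subseteq> E" using sub T by blast
        then show "y \<in> E" using \<open>y \<in> T\<close> by blast
      qed
      then show ?thesis using T by (auto simp: openin_open)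
    next
      case bS: True
      show ?thesis
      proof (cases "\<tau> b = b")
        case False
        obtain O1 O2 where O: "open O1" "open O2" "b \<in> O1" "\<tau> b \<in> O2" "O1 \<inter> O2 = {}"
          using hausdorff[of b "\<tau> b"] False by metis
        define T where "T = O1 \<inter> \<tau> -` O2"
        have "open T" unfolding T_def using O open_vimage_UNIV[OF aff_cont[OF a]] by blast
        moreover have "b \<in> T" using O unfolding T_def by blast
        moreover have "\<forall>x\<in>T. \<tau> x \<noteq> x" using O unfolding T_def by auto
        ultimately show ?thesis using EF by (auto simp: openin_open)
      next
        case fixb: True
        obtain V \<psi> \<psi>' k r where sc: "schart S A b V \<psi> \<psi>' k r" using schart_ex[OF at bS] by blast
        define P where "P = {y \<in> V. norm (\<psi> y) < r} - {b}"
        have PV: "P = V - {b}" unfolding P_def using sc_psi_in[OF sc] by auto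
        have Pconn: "connected P" unfolding P_def using sc_punct_conn[OF sc] by simp
        have PS: "P \<inter> S = {}" using sc_S[OF sc] PV by auto
        have Popen: "open P" unfolding PV using sc_open[OF sc] by (simp add: open_delete)
        have alt: "(\<forall>y\<in>P. \<tau> y = y) \<or> (\<forall>y\<in>P. \<tau> y \<noteq> y)"
        proof (rule ccontr)
          assume "\<not> ?thesis"
          then obtain y1 y2 where y: "y1 \<in> P" "y2 \<in> P" "\<tau> y1 = y1" "\<tau> y2 \<noteq> y2" by blast
          have "\<tau> y2 = y2"
          proof (rule connected_induction_simple[OF Pconn y(1,2), of "\<lambda>y. \<tau> y = y"])
            show "\<tau> y1 = y1" by fact
            fix c assume cP: "c \<in> P"
            then have "c \<notin> S" using PS by blast
            then obtain T where T: "open T" "c \<in> T" "\<forall>x\<in>T. \<forall>y\<in>T. \<tau> x = x \<longrightarrow> \<tau> y = y"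
              using transl_local[OF at a] by blast
            then show "\<exists>T. openin (top_of_set P) T \<and> c \<in> T \<and> (\<forall>x\<in>T. \<forall>y\<in>T. \<tau> x = x \<longrightarrow> \<tau> y = y)"
              using cP by (intro exI[of _ "T \<inter> P"]) (auto simp: openin_open)
          qed
          then show False using y by blast
        qed
        have "\<forall>x\<in>V. \<forall>y\<in>V. x \<in> E \<longrightarrow> y \<in> E"
        proof (intro ballI impI)
          fix x y assume xy: "x \<in> V" "y \<in> V" "x \<in> E"
          show "y \<in> E"
          proof (cases "\<forall>y\<in>P. \<tau> y = y")
            case True
            then have "\<forall>y\<in>V. \<tau> y = y" using PV fixb by blast
            then have "V \<subseteq> E" using sub sc_open[OF sc] by blast
            then show ?thesis using xy by blast
          next
            case False
            then have nf: "\<forall>y\<in>P. \<tau> y \<noteq> y" using alt by blast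
            then have "x = b" using xy EF PV by blast
            then have "b \<in> E" using xy by simp
            then obtain z where z: "z \<in> E \<inter> V" "z \<noteq> b"
              using sc_nonisolated[OF sc Eopen, of r] sc_r[OF sc] by blast
            then have "z \<in> P" using PV by blast
            then show ?thesis using nf EF z by blast
          qed
        qed
        then show ?thesis using sc_open[OF sc] sc_s[OF sc] by (auto simp: openin_open)
      qed
    qed
  qed (use y0E in auto)
  then show ?thesis using EF by blast
qed

section \<open>Cone lemma\<close>

lemma pow_lt_root:
  assumes "k \<ge> 1" "(x::real) \<ge> 0" "\<rho> > 0"
  shows "x ^ k < \<rho> \<longleftrightarrow> x < root k \<rho>"
proof -
  have "x ^ k < \<rho> \<longleftrightarrow> root k (x ^ k) < root k \<rho>" using assms by simp
  also have "root k (x ^ k) = x" using assms by (simp add: real_root_power_cancel)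
  finally show ?thesis .
qed

lemma cone_local:
  assumes at: "translation_atlas S A" and a: "affine_aut_with S A \<eta> (- mat 1)"
    and sc1: "schart S A s V \<psi> \<psi>' k r" and sc2: "schart S A s2 V2 \<psi>2 \<psi>2' k2 r2"
    and z: "z \<in> V" "z \<noteq> s" "\<eta> z \<in> V2"
  shows "\<exists>W. open W \<and> z \<in> W \<and> W \<subseteq> V \<and> \<eta> ` W \<subseteq> V2 \<and>
     (\<forall>y\<in>W. \<psi>2 (\<eta> y) ^ k2 + \<psi> y ^ k = \<psi>2 (\<eta> z) ^ k2 + \<psi> z ^ k)"
proof -
  have zS: "z \<notin> S" using sc_S[OF sc1] z by blast
  have czS: "\<eta> z \<notin> S" using aff_nonsing[OF a zS] .
  obtain U f where UA: "(U,f) \<in> A" and zU: "z \<in> U" using atlas_cover[OF at zS] by blast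
  obtain U2 g where U2A: "(U2,g) \<in> A" and czU: "\<eta> z \<in> U2" using atlas_cover[OF at czS] by blast
  obtain W1 c1 where W1: "open W1" "z \<in> W1" "W1 \<subseteq> U \<inter> V" and e1: "\<forall>y\<in>W1. f y = \<psi> y ^ k + c1"
    using sc_local[OF sc1 UA zU z(1)] by blast
  obtain W2 c2 where W2: "open W2" "\<eta> z \<in> W2" "W2 \<subseteq> U2 \<inter> V2" and e2: "\<forall>y\<in>W2. g y = \<psi>2 y ^ k2 + c2"
    using sc_local[OF sc2 U2A czU z(3)] by blast
  from aff_local[OF a UA U2A zU czU] obtain W3 c3 where W3: "open W3" "z \<in> W3" "W3 \<subseteq> U" "\<eta> ` W3 \<subseteq> U2"
    and e3: "\<forall>y\<in>W3. g (\<eta> y) = mat_app (- mat 1) (f y) + c3" by blast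
  define W where "W = W1 \<inter> W3 \<inter> \<eta> -` W2"
  have "open W" unfolding W_def using W1 W2 W3 open_vimage_UNIV[OF aff_cont[OF a]] by blast
  moreover have "z \<in> W" unfolding W_def using W1 W2 W3 by blast
  moreover have "W \<subseteq> V" unfolding W_def using W1 by blast
  moreover have "\<eta> ` W \<subseteq> V2" unfolding W_def using W2 by blast
  moreover have key: "\<forall>y\<in>W. \<psi>2 (\<eta> y) ^ k2 + \<psi> y ^ k = c3 - c2 - c1"
  proof
    fix y assume "y \<in> W"
    then have y: "y \<in> W1" "y \<in> W3" "\<eta> y \<in> W2" unfolding W_def by auto
    have "g (\<eta> y) = - f y + c3" using e3 y by simp
    moreover have "g (\<eta> y) = \<psi>2 (\<eta> y) ^ k2 + c2" using e2 y by blast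
    moreover have "f y = \<psi> y ^ k + c1" using e1 y by blast
    ultimately show "\<psi>2 (\<eta> y) ^ k2 + \<psi> y ^ k = c3 - c2 - c1" by (simp add: algebra_simps)
  qed
  moreover have "\<psi>2 (\<eta> z) ^ k2 + \<psi> z ^ k = c3 - c2 - c1" using key \<open>z \<in> W\<close> by blast
  ultimately show ?thesis by auto
qed

lemma cone:
  assumes at: "translation_atlas S A" and a: "affine_aut_with S A \<eta> (- mat 1)"
    and sc1: "schart S A s V \<psi> \<psi>' k r" and sc2: "schart S A s2 V2 \<psi>2 \<psi>2' k2 r2"
    and cs: "\<eta> s = s2" and \<rho>: "\<rho> > 0" "\<rho> < r ^ k" "\<rho> < r2 ^ k2"
    and y: "(y::'a::t2_space) \<in> V" "norm (\<psi> y) ^ k < \<rho>"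
  shows "\<eta> y \<in> V2 \<and> \<psi>2 (\<eta> y) ^ k2 = - (\<psi> y ^ k)"
proof (cases "y = s")
  case True
  then show ?thesis using cs sc_s[OF sc2] sc_0[OF sc1] sc_0[OF sc2] sc_k[OF sc1] sc_k[OF sc2]
    by (simp add: power_0_left)
next
  case ys: False
  define F where "F y = \<psi>2 (\<eta> y) ^ k2 + \<psi> y ^ k" for y
  have k1: "k \<ge> 1" and k2: "k2 \<ge> 1" using sc_k[OF sc1] sc_k[OF sc2] .
  have contc: "continuous_on UNIV \<eta>" using aff_cont[OF a] .
  \<comment> \<open>Step 1: F vanishes on a small punctured neighbourhood\<close>
  define Q where "Q = V \<inter> \<eta> -` V2"
  have Qo: "open Q" unfolding Q_def using sc_open[OF sc1] sc_open[OF sc2] open_vimage_UNIV[OF contc] by blast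
  have "open (\<psi>' -` Q \<inter> ball 0 r)"
    using continuous_on_open_vimage[of "ball 0 r" \<psi>'] sc_cont'[OF sc1] Qo by blast
  moreover have "0 \<in> \<psi>' -` Q \<inter> ball 0 r"
    using sc_inv0[OF sc1] sc_s[OF sc1] sc_s[OF sc2] cs sc_r[OF sc1] unfolding Q_def by auto
  ultimately obtain e where e: "e > 0" "ball 0 e \<subseteq> \<psi>' -` Q \<inter> ball 0 r"
    by (meson open_contains_ball)
  define \<delta> where "\<delta> = min e r"
  have \<delta>: "\<delta> > 0" "\<delta> \<le> r" "\<delta> \<le> e" using e sc_r[OF sc1] unfolding \<delta>_def by auto
  define B where "B = {y \<in> V. norm (\<psi> y) < \<delta>} - {s}"
  have Bconn: "connected B" unfolding B_def using sc_punct_conn[OF sc1 \<delta>(2)] .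
  have BQ: "\<And>z. z \<in> B \<Longrightarrow> \<eta> z \<in> V2"
  proof -
    fix z assume "z \<in> B"
    then have zV: "z \<in> V" and "\<psi> z \<in> ball 0 e" using \<delta> unfolding B_def by auto
    then have "\<psi>' (\<psi> z) \<in> Q" using e by blast
    then show "\<eta> z \<in> V2" using sc_inv1[OF sc1 zV] unfolding Q_def by simp
  qed
  obtain z0 where z0: "z0 \<in> UNIV \<inter> V" "z0 \<noteq> s" "norm (\<psi> z0) < \<delta>"
    using sc_nonisolated[OF sc1 open_UNIV _ \<delta>(1)] by blast
  have z0B: "z0 \<in> B" using z0 unfolding B_def by auto
  have Fconst: "F z = F z0" if zB: "z \<in> B" for z
  proof (rule connected_induction_simple[OF Bconn z0B zB, of "\<lambda>z. F z = F z0"])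
    show "F z0 = F z0" ..
    fix c assume cB: "c \<in> B"
    then have "c \<in> V" "c \<noteq> s" unfolding B_def by auto
    obtain W where W: "open W" "c \<in> W"
      and Wc: "\<forall>y\<in>W. \<psi>2 (\<eta> y) ^ k2 + \<psi> y ^ k = \<psi>2 (\<eta> c) ^ k2 + \<psi> c ^ k"
      using cone_local[OF at a sc1 sc2 \<open>c \<in> V\<close> \<open>c \<noteq> s\<close> BQ[OF cB]] by blast
    have WF: "\<forall>y\<in>W. F y = F c" using Wc unfolding F_def .
    have oT: "openin (top_of_set B) (W \<inter> B)" using W(1) by (auto simp: openin_open)
    have "\<forall>x\<in>W \<inter> B. \<forall>y\<in>W \<inter> B. F x = F z0 \<longrightarrow> F y = F z0" using WF by simp
    then show "\<exists>T. openin (top_of_set B) T \<and> c \<in> T \<and> (\<forall>x\<in>T. \<forall>y\<in>T. F x = F z0 \<longrightarrow> F y = F z0)"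
      using oT W(2) cB by blast
  qed
  define G where "G w = \<psi>2 (\<eta> (\<psi>' w)) ^ k2 + w ^ k" for w
  have contG: "continuous_on (ball 0 \<delta>) G"
  proof -
    have c1: "continuous_on (ball 0 \<delta>) \<psi>'"
      by (rule continuous_on_subset[OF sc_cont'[OF sc1]]) (use \<delta> in auto)
    have c2: "continuous_on (ball 0 \<delta>) (\<lambda>w. \<eta> (\<psi>' w))"
      by (rule continuous_on_compose2[OF contc c1]) auto
    have im: "(\<lambda>w. \<eta> (\<psi>' w)) ` ball 0 \<delta> \<subseteq> V2"
    proof
      fix x assume "x \<in> (\<lambda>w. \<eta> (\<psi>' w)) ` ball 0 \<delta>"
      then obtain w where w: "w \<in> ball 0 \<delta>" "x = \<eta> (\<psi>' w)" by blast
      then have "w \<in> ball 0 e" using \<delta> by auto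
      then have "\<psi>' w \<in> Q" using e by blast
      then show "x \<in> V2" using w unfolding Q_def by auto
    qed
    have "continuous_on (ball 0 \<delta>) (\<lambda>w. \<psi>2 (\<eta> (\<psi>' w)))"
      by (rule continuous_on_compose2[OF sc_cont[OF sc2] c2 im])
    then show ?thesis unfolding G_def by (intro continuous_intros)
  qed
  have G0: "G 0 = 0" unfolding G_def using sc_inv0[OF sc1] cs sc_0[OF sc2] k1 k2
    by (simp add: power_0_left)
  have GF: "G w = F z0" if "w \<in> ball 0 \<delta>" "w \<noteq> 0" for w
  proof -
    have wr: "w \<in> ball 0 r" using that \<delta> by auto
    have "\<psi>' w \<in> B" unfolding B_def using sc_punct_eq[OF sc1 \<delta>(2)] that by blast
    then have "F (\<psi>' w) = F z0" by (rule Fconst)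
    moreover have "F (\<psi>' w) = G w" unfolding F_def G_def using sc_inv2[OF sc1 wr] by simp
    ultimately show ?thesis by simp
  qed
  have Fz0: "F z0 = 0"
  proof -
    have lim: "(G \<longlongrightarrow> G 0) (at 0 within ball 0 \<delta>)"
      using contG \<delta>(1) unfolding continuous_on_def by simp
    have ev: "eventually (\<lambda>w. G w = F z0) (at 0 within ball 0 \<delta>)"
      unfolding eventually_at using \<delta>(1) GF by (intro exI[of _ 1]) auto
    have "((\<lambda>w::complex. F z0) \<longlongrightarrow> G 0) (at 0 within ball 0 \<delta>)"
      using iffD1[OF tendsto_cong[OF ev] lim] .
    moreover have "\<not> trivial_limit (at (0::complex) within ball 0 \<delta>)"
      using \<delta>(1) by (simp add: trivial_limit_within islimpt_ball)
    ultimately have "F z0 = G 0" using tendsto_const_iff by blast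
    then show ?thesis using G0 by simp
  qed
  \<comment> \<open>Step 2: propagate over the whole punctured cone neighbourhood\<close>
  define R where "R = root k \<rho>"
  define R2 where "R2 = root k2 \<rho>"
  have Rr: "R < r"
  proof -
    have "root k \<rho> < root k (r ^ k)" using \<rho>(2) k1 by simp
    also have "root k (r ^ k) = r" using sc_r[OF sc1] k1 by (simp add: real_root_power_cancel)
    finally show ?thesis unfolding R_def .
  qed
  have R2r: "R2 < r2"
  proof -
    have "root k2 \<rho> < root k2 (r2 ^ k2)" using \<rho>(3) k2 by simp
    also have "root k2 (r2 ^ k2) = r2" using sc_r[OF sc2] k2 by (simp add: real_root_power_cancel)
    finally show ?thesis unfolding R2_def .
  qed
  have R0: "R > 0" unfolding R_def using \<rho> k1 by (simp add: real_root_gt_zero)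
  define N where "N = {y \<in> V. norm (\<psi> y) < R} - {s}"
  have Nconn: "connected N" unfolding N_def using sc_punct_conn[OF sc1] Rr by simp
  have Nopen: "open N" unfolding N_def by (intro open_delete sc_small_open[OF sc1])
  have yN: "y \<in> N" unfolding N_def R_def using y ys pow_lt_root[OF k1 _ \<rho>(1)] by auto
  define K2 where "K2 = \<psi>2' ` cball 0 R2"
  have K2c: "closed K2"
  proof -
    have "continuous_on (cball 0 R2) \<psi>2'"
      by (rule continuous_on_subset[OF sc_cont'[OF sc2]]) (use R2r in auto)
    then have "compact K2" unfolding K2_def by (rule compact_continuous_image) simp
    then show ?thesis by (rule compact_imp_closed)
  qed
  have K2mem: "x \<in> K2" if "x \<in> V2" "norm (\<psi>2 x) < R2" for x
  proof -
    have "x = \<psi>2' (\<psi>2 x)" using sc_inv1[OF sc2 that(1)] by simp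
    then show ?thesis unfolding K2_def using that(2) by auto
  qed
  have K2V: "K2 \<subseteq> V2" unfolding K2_def using sc_inv_in[OF sc2] R2r by auto
  obtain z1 where z1: "z1 \<in> UNIV \<inter> V" "z1 \<noteq> s" "norm (\<psi> z1) < min \<delta> R"
    using sc_nonisolated[OF sc1 open_UNIV _, of "min \<delta> R"] \<delta>(1) R0 by auto
  have z1B: "z1 \<in> B" and z1N: "z1 \<in> N" using z1 unfolding B_def N_def by auto
  have P1: "\<eta> z1 \<in> V2 \<and> F z1 = 0" using BQ[OF z1B] Fconst[OF z1B] Fz0 by simp
  have "\<eta> y \<in> V2 \<and> F y = 0"
  proof (rule connected_induction_simple[OF Nconn z1N yN, of "\<lambda>z. \<eta> z \<in> V2 \<and> F z = 0"])
    show "\<eta> z1 \<in> V2 \<and> F z1 = 0" by (rule P1)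
    fix c assume cN: "c \<in> N"
    then have cV: "c \<in> V" "c \<noteq> s" "norm (\<psi> c) < R" unfolding N_def by auto
    show "\<exists>T. openin (top_of_set N) T \<and> c \<in> T \<and>
            (\<forall>x\<in>T. \<forall>y\<in>T. \<eta> x \<in> V2 \<and> F x = 0 \<longrightarrow> \<eta> y \<in> V2 \<and> F y = 0)"
    proof (cases "\<eta> c \<in> V2")
      case True
      obtain W where W: "open W" "c \<in> W" "\<eta> ` W \<subseteq> V2"
        and Wc: "\<forall>y\<in>W. \<psi>2 (\<eta> y) ^ k2 + \<psi> y ^ k = \<psi>2 (\<eta> c) ^ k2 + \<psi> c ^ k"
        using cone_local[OF at a sc1 sc2 cV(1,2) True] by blast
      have WF: "\<forall>y\<in>W. F y = F c" using Wc unfolding F_def .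
      have oT: "openin (top_of_set N) (W \<inter> N)" using W(1) by (auto simp: openin_open)
      have "\<forall>x\<in>W \<inter> N. \<forall>y\<in>W \<inter> N. \<eta> x \<in> V2 \<and> F x = 0 \<longrightarrow> \<eta> y \<in> V2 \<and> F y = 0"
        using WF W(3) by auto
      then show ?thesis using oT W(2) cN by blast
    next
      case False
      define T where "T = N \<inter> \<eta> -` (- K2)"
      have "open T" unfolding T_def using Nopen K2c open_vimage_UNIV[OF contc] by (auto simp: closed_def)
      moreover have "c \<in> T" unfolding T_def using cN False K2V by auto
      moreover have "\<forall>x\<in>T. \<not> (\<eta> x \<in> V2 \<and> F x = 0)"
      proof (intro ballI notI)
        fix x assume xT: "x \<in> T" and P: "\<eta> x \<in> V2 \<and> F x = 0"
        then have "\<psi>2 (\<eta> x) ^ k2 = - (\<psi> x ^ k)" unfolding F_def by (simp add: add_eq_0_iff)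
        then have "norm (\<psi>2 (\<eta> x)) ^ k2 = norm (\<psi> x) ^ k" by (metis norm_minus_cancel norm_power)
        moreover have "norm (\<psi> x) < R" using xT unfolding T_def N_def by auto
        then have "norm (\<psi> x) ^ k < \<rho>" unfolding R_def using pow_lt_root[OF k1 _ \<rho>(1)] by simp
        ultimately have "norm (\<psi>2 (\<eta> x)) ^ k2 < \<rho>" by simp
        then have "norm (\<psi>2 (\<eta> x)) < R2" unfolding R2_def using pow_lt_root[OF k2 norm_ge_zero \<rho>(1)] by blast
        then have "\<eta> x \<in> K2" using K2mem P by blast
        then show False using xT unfolding T_def by auto
      qed
      ultimately show ?thesis by (intro exI[of _ T]) (auto simp: openin_open T_def)
    qed
  qed
  then show ?thesis unfolding F_def by (simp add: add_eq_0_iff)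
qed



lemma finite_roots_eq:
  assumes "(k::nat) \<ge> 1"
  shows "finite {w::complex. w ^ k = c}"
proof -
  have "{w::complex. w ^ k = c} =
        {z. (\<Sum>i\<le>k. (if i = 0 then -c else if i = k then 1 else 0) * z ^ i) = 0}"
    using root_polyfun[OF assms] by blast
  moreover have "finite {z::complex. (\<Sum>i\<le>k. (if i = 0 then -c else if i = k then 1 else 0) * z ^ i) = 0}"
    by (rule polyfun_roots_finite[where k=k]) (use assms in auto)
  ultimately show ?thesis by simp
qed

lemma fixed_local:
  assumes at: "translation_atlas S A" and a: "affine_aut_with S A \<eta> (- mat 1)"
    and aS: "(a::'a::t2_space) \<notin> S"
  shows "\<exists>T. open T \<and> a \<in> T \<and> (\<forall>y\<in>T. \<eta> y = y \<longrightarrow> y = a)"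
proof (cases "\<eta> a = a")
  case False
  obtain O1 O2 where O: "open O1" "open O2" "a \<in> O1" "\<eta> a \<in> O2" "O1 \<inter> O2 = {}"
    using hausdorff[of a "\<eta> a"] False by metis
  define T where "T = O1 \<inter> \<eta> -` O2"
  have "open T" unfolding T_def using O open_vimage_UNIV[OF aff_cont[OF a]] by blast
  moreover have "a \<in> T" using O unfolding T_def by blast
  moreover have "\<forall>x\<in>T. \<eta> x \<noteq> x" using O unfolding T_def by auto
  ultimately show ?thesis by blast
next
  case True
  obtain U f where UA: "(U,f) \<in> A" and aU: "a \<in> U" using atlas_cover[OF at aS] by blast
  from aff_local[OF a UA UA aU] True aU obtain W c where W: "open W" "a \<in> W" "W \<subseteq> U"
    and e: "\<forall>y\<in>W. f (\<eta> y) = mat_app (- mat 1) (f y) + c" by auto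
  have "y = a" if "y \<in> W" "\<eta> y = y" for y
  proof -
    have "f y = - f y + c" using e that by (metis mat_app_neg_one)
    moreover have "f a = - f a + c" using e W(2) True by (metis mat_app_neg_one)
    ultimately have "2 * f y = 2 * f a" by (simp add: algebra_simps)
    then have "f y = f a" by simp
    then show ?thesis using chart_inj[OF at UA] W that aU by blast
  qed
  then show ?thesis using W by blast
qed

lemma finite_t2_sep:
  assumes "finite (S::'a::t2_space set)"
  shows "\<exists>Q. \<forall>s\<in>S. open (Q s) \<and> s \<in> Q s \<and> (\<forall>t\<in>S. t \<noteq> s \<longrightarrow> Q s \<inter> Q t = {})"
proof -
  define D where "D s t = (SOME p. open (fst p) \<and> open (snd p) \<and> s \<in> fst p \<and> t \<in> snd p \<and> fst p \<inter> snd p = {})"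
    for s t :: 'a
  have D: "open (fst (D s t)) \<and> open (snd (D s t)) \<and> s \<in> fst (D s t) \<and> t \<in> snd (D s t) \<and>
           fst (D s t) \<inter> snd (D s t) = {}" if st: "s \<noteq> t" for s t
  proof -
    obtain U V where "open U" "open V" "s \<in> U" "t \<in> V" "U \<inter> V = {}" using hausdorff[OF st] by blast
    then have "\<exists>p. open (fst p) \<and> open (snd p) \<and> s \<in> fst p \<and> t \<in> snd p \<and> fst p \<inter> snd p = {}"
      by (intro exI[of _ "(U,V)"]) simp
    then show ?thesis unfolding D_def by (rule someI_ex)
  qed
  define Q where "Q s = (\<Inter>t\<in>S - {s}. fst (D s t) \<inter> snd (D t s))" for s
  have "open (Q s)" if "s \<in> S" for s
    unfolding Q_def using assms D by (intro open_INT) auto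
  moreover have "s \<in> Q s" for s
  proof -
    have "s \<in> fst (D s t) \<inter> snd (D t s)" if "t \<noteq> s" for t using D[of s t] D[of t s] that by auto
    then show ?thesis unfolding Q_def by blast
  qed
  moreover have "Q s \<inter> Q t = {}" if "s \<in> S" "t \<in> S" "t \<noteq> s" for s t
  proof -
    have "Q s \<subseteq> fst (D s t)" unfolding Q_def using that by auto
    moreover have "Q t \<subseteq> snd (D s t)" unfolding Q_def using that by auto
    ultimately show ?thesis using D[of s t] that by blast
  qed
  ultimately show ?thesis by blast
qed

theorem lemma4p5:
  fixes S :: "'a::t2_space set" and A :: "('a set \<times> ('a \<Rightarrow> complex)) set"
    and \<phi> :: "'a \<Rightarrow> 'a" and p :: 'a
  assumes "lattice_surface S A"
    and "affine_aut_with S A \<phi> (- mat 1)"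
    and "\<phi> p = p"
  shows "periodic_point S A p"
proof -
  have ts: "translation_surface S A" using assms(1) unfolding lattice_surface_def by blast
  have at: "translation_atlas S A" and cpt: "compact (UNIV::'a set)" and fin: "finite S"
    and ne: "S \<noteq> {}" using ts unfolding translation_surface_def by blast+
  define C where "C s = (SOME c. schart S A s (fst c) (fst (snd c)) (fst (snd (snd c)))
      (fst (snd (snd (snd c)))) (snd (snd (snd (snd c)))))" for s
  define V where "V s = fst (C s)" for s
  define \<psi> where "\<psi> s = fst (snd (C s))" for s
  define \<psi>' where "\<psi>' s = fst (snd (snd (C s)))" for s
  define k where "k s = fst (snd (snd (snd (C s))))" for s
  define r where "r s = snd (snd (snd (snd (C s))))" for s
  have sc: "schart S A s (V s) (\<psi> s) (\<psi>' s) (k s) (r s)" if sS: "s \<in> S" for s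
  proof -
    obtain V0 \<psi>0 \<psi>0' k0 r0 where "schart S A s V0 \<psi>0 \<psi>0' k0 r0" using schart_ex[OF at sS] by blast
    then have "\<exists>c. schart S A s (fst c) (fst (snd c)) (fst (snd (snd c)))
      (fst (snd (snd (snd c)))) (snd (snd (snd (snd c))))"
      by (intro exI[of _ "(V0, \<psi>0, \<psi>0', k0, r0)"]) simp
    then show ?thesis unfolding V_def \<psi>_def \<psi>'_def k_def r_def C_def by (rule someI_ex)
  qed
  obtain Q where Q: "\<And>s. s \<in> S \<Longrightarrow> open (Q s)" "\<And>s. s \<in> S \<Longrightarrow> s \<in> Q s"
    "\<And>s t. s \<in> S \<Longrightarrow> t \<in> S \<Longrightarrow> t \<noteq> s \<Longrightarrow> Q s \<inter> Q t = {}"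
    using finite_t2_sep[OF fin] by metis
  define E where "E s = (SOME e. e > 0 \<and> ball 0 e \<subseteq> \<psi>' s -` Q s \<inter> ball 0 (r s))" for s
  have E: "E s > 0 \<and> ball 0 (E s) \<subseteq> \<psi>' s -` Q s \<inter> ball 0 (r s)" if "s \<in> S" for s
  proof -
    have "open (\<psi>' s -` Q s \<inter> ball 0 (r s))"
      using continuous_on_open_vimage[of "ball 0 (r s)" "\<psi>' s"] sc_cont'[OF sc[OF that]] Q(1)[OF that]
      by blast
    moreover have "0 \<in> \<psi>' s -` Q s \<inter> ball 0 (r s)"
      using sc_inv0[OF sc[OF that]] Q(2)[OF that] sc_r[OF sc[OF that]] by auto
    ultimately have "\<exists>e. e > 0 \<and> ball 0 e \<subseteq> \<psi>' s -` Q s \<inter> ball 0 (r s)"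
      by (meson open_contains_ball)
    then show ?thesis unfolding E_def by (rule someI_ex)
  qed
  have Er: "E s \<le> r s" if "s \<in> S" for s
  proof (rule ccontr)
    assume "\<not> E s \<le> r s"
    then have "of_real (r s) \<in> ball (0::complex) (E s)" by (simp add: abs_of_pos sc_r[OF sc[OF that]])
    then have "of_real (r s) \<in> ball (0::complex) (r s)" using E[OF that] by blast
    then show False using sc_r[OF sc[OF that]] by (simp add: abs_of_pos)
  qed
  define \<rho> where "\<rho> = Min ((\<lambda>s. E s ^ k s) ` S) / 2"
  have "0 < Min ((\<lambda>s. E s ^ k s) ` S)" using fin ne E by (subst Min_gr_iff) auto
  then have \<rho>0: "\<rho> > 0" unfolding \<rho>_def by simp
  have \<rho>E: "\<rho> < E s ^ k s" if "s \<in> S" for s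
  proof -
    have "Min ((\<lambda>s. E s ^ k s) ` S) \<le> E s ^ k s" using fin that by (intro Min_le) auto
    then show ?thesis unfolding \<rho>_def using \<rho>0 unfolding \<rho>_def by linarith
  qed
  have \<rho>r: "\<rho> < r s ^ k s" if "s \<in> S" for s
  proof -
    have "E s ^ k s \<le> r s ^ k s" using Er[OF that] E[OF that] by (intro power_mono) auto
    then show ?thesis using \<rho>E[OF that] by linarith
  qed
  define N where "N s = {y \<in> V s. norm (\<psi> s y) ^ k s < \<rho>}" for s
  have Nalt: "N s = {y \<in> V s. norm (\<psi> s y) < root (k s) \<rho>}" if "s \<in> S" for s
    unfolding N_def using pow_lt_root[OF sc_k[OF sc[OF that]] norm_ge_zero \<rho>0] by auto
  have Nopen: "open (N s)" if "s \<in> S" for s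
    unfolding Nalt[OF that] by (rule sc_small_open[OF sc[OF that]])
  have sN: "s \<in> N s" if "s \<in> S" for s
    unfolding N_def using sc_s[OF sc[OF that]] sc_0[OF sc[OF that]] sc_k[OF sc[OF that]] \<rho>0
    by (simp add: power_0_left)
  have NQ: "N s \<subseteq> Q s" if "s \<in> S" for s
  proof
    fix y assume y: "y \<in> N s"
    have k1: "k s \<ge> 1" using sc_k[OF sc[OF that]] .
    have "root (k s) \<rho> < root (k s) (E s ^ k s)" using \<rho>E[OF that] k1 by simp
    also have "root (k s) (E s ^ k s) = E s" using E[OF that] k1 by (simp add: real_root_power_cancel)
    finally have "norm (\<psi> s y) < E s" using y Nalt[OF that] by auto
    then have "\<psi> s y \<in> ball 0 (E s)" by simp
    then have "\<psi>' s (\<psi> s y) \<in> Q s" using E[OF that] by blast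
    then show "y \<in> Q s" using sc_inv1[OF sc[OF that]] y unfolding N_def by simp
  qed
  have Ndisj: "N s \<inter> N t = {}" if "s \<in> S" "t \<in> S" "t \<noteq> s" for s t
    using NQ[OF that(1)] NQ[OF that(2)] Q(3)[OF that] by blast
  define K where "K = UNIV - (\<Union>s\<in>S. N s)"
  have Kc: "compact K"
  proof -
    have "closed K" unfolding K_def using Nopen by (intro closed_Diff) auto
    then show ?thesis using compact_Int_closed[OF cpt] by simp
  qed
  have KS: "K \<inter> S = {}" unfolding K_def using sN by blast
  define CC where "CC = {\<eta>. affine_aut_with S A \<eta> (- mat 1)}"
  \<comment> \<open>finiteness of the set of affine automorphisms with derivative -Id\<close>
  obtain s0 where s0: "s0 \<in> S" using ne by blast
  have R0: "root (k s0) \<rho> > 0" using \<rho>0 sc_k[OF sc[OF s0]] by (simp add: real_root_gt_zero)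
  obtain y0 where y0: "y0 \<in> UNIV \<inter> V s0" "y0 \<noteq> s0" "norm (\<psi> s0 y0) < root (k s0) \<rho>"
    using sc_nonisolated[OF sc[OF s0] open_UNIV _ R0] by blast
  have y0N: "y0 \<in> N s0" using y0 Nalt[OF s0] by auto
  have y0S: "y0 \<notin> S" using y0 sc_S[OF sc[OF s0]] by blast
  define c0 where "c0 = - (\<psi> s0 y0 ^ k s0)"
  have img: "\<eta> y0 \<in> (\<Union>t\<in>S. \<psi>' t ` {w. w ^ k t = c0})" if "\<eta> \<in> CC" for \<eta>
  proof -
    have a: "affine_aut_with S A \<eta> (- mat 1)" using that unfolding CC_def by simp
    have tS: "\<eta> s0 \<in> S" using a s0 unfolding affine_aut_with_def by blast
    have "\<eta> y0 \<in> V (\<eta> s0) \<and> \<psi> (\<eta> s0) (\<eta> y0) ^ k (\<eta> s0) = - (\<psi> s0 y0 ^ k s0)"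
      using cone[OF at a sc[OF s0] sc[OF tS] refl \<rho>0 \<rho>r[OF s0] \<rho>r[OF tS]] y0 y0N
      unfolding N_def by blast
    moreover have "\<eta> y0 = \<psi>' (\<eta> s0) (\<psi> (\<eta> s0) (\<eta> y0))" if "\<eta> y0 \<in> V (\<eta> s0)"
      using sc_inv1[OF sc[OF tS] that] by simp
    ultimately show ?thesis using tS unfolding c0_def by blast
  qed
  have "finite (\<Union>t\<in>S. \<psi>' t ` {w. w ^ k t = c0})"
  proof (rule finite_UN_I[OF fin])
    fix t assume "t \<in> S"
    then have "k t \<ge> 1" using sc_k[OF sc] by blast
    then show "finite (\<psi>' t ` {w. w ^ k t = c0})" using finite_roots_eq by blast
  qed
  moreover have "(\<lambda>\<eta>. \<eta> y0) ` CC \<subseteq> (\<Union>t\<in>S. \<psi>' t ` {w. w ^ k t = c0})" using img by blast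
  ultimately have fimg: "finite ((\<lambda>\<eta>. \<eta> y0) ` CC)" using finite_subset by blast
  have inj: "inj_on (\<lambda>\<eta>. \<eta> y0) CC"
  proof
    fix \<eta>1 \<eta>2 assume e1: "\<eta>1 \<in> CC" and e2: "\<eta>2 \<in> CC" and eq: "\<eta>1 y0 = \<eta>2 y0"
    have a1: "affine_aut_with S A \<eta>1 (- mat 1)" and a2: "affine_aut_with S A \<eta>2 (- mat 1)"
      using e1 e2 unfolding CC_def by auto
    obtain \<eta>2' where h2: "homeomorphism UNIV UNIV \<eta>2 \<eta>2'" using aff_homeo[OF a2] by blast
    have mm: "(- mat 1) ** (- mat 1) = (mat 1 :: real^2^2)"
      by (simp add: neg_mul mul_neg matrix_mul_lid)
    have a2': "affine_aut_with S A \<eta>2' (- mat 1)" using aff_inv[OF at a2 h2 mm mm] .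
    have "affine_aut_with S A (\<eta>2' \<circ> \<eta>1) ((- mat 1) ** (- mat 1))" using aff_comp[OF at a1 a2'] .
    then have at1: "affine_aut_with S A (\<eta>2' \<circ> \<eta>1) (mat 1)" using mm by simp
    have h2i: "\<And>x. \<eta>2' (\<eta>2 x) = x" "\<And>x. \<eta>2 (\<eta>2' x) = x" using h2 by (auto simp: homeomorphism_def)
    have "(\<eta>2' \<circ> \<eta>1) y0 = y0" using eq h2i by simp
    then have "\<And>x. (\<eta>2' \<circ> \<eta>1) x = x" using rigidity[OF ts at1 y0S] by blast
    then have "\<And>x. \<eta>1 x = \<eta>2 x" using h2i by (metis comp_apply)
    then show "\<eta>1 = \<eta>2" by blast
  qed
  have finC: "finite CC" using finite_imageD[OF fimg inj] .
  have finF: "finite (K \<inter> {q. q \<notin> S \<and> \<eta> q = q})" if "\<eta> \<in> CC" for \<eta>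
  proof (rule finite_not_islimpt_in_compact[OF Kc])
    fix z assume "z \<in> K"
    then have zS: "z \<notin> S" using KS by blast
    have a: "affine_aut_with S A \<eta> (- mat 1)" using that unfolding CC_def by simp
    obtain T where T: "open T" "z \<in> T" "\<forall>y\<in>T. \<eta> y = y \<longrightarrow> y = z" using fixed_local[OF at a zS] by blast
    show "\<not> z islimpt {q. q \<notin> S \<and> \<eta> q = q}"
      unfolding islimpt_def using T by blast
  qed
  have orb: "{\<psi>0 p |\<psi>0. \<psi>0 \<in> Aff S A} \<subseteq> S \<union> (\<Union>\<eta>\<in>CC. K \<inter> {q. q \<notin> S \<and> \<eta> q = q})"
  proof
    fix q assume "q \<in> {\<psi>0 p |\<psi>0. \<psi>0 \<in> Aff S A}"
    then obtain g L where ag: "affine_aut_with S A g L" and qg: "q = g p" unfolding Aff_def by blast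
    show "q \<in> S \<union> (\<Union>\<eta>\<in>CC. K \<inter> {q. q \<notin> S \<and> \<eta> q = q})"
    proof (cases "q \<in> S")
      case True then show ?thesis by blast
    next
      case qS: False
      obtain g' where hg: "homeomorphism UNIV UNIV g g'" using aff_homeo[OF ag] by blast
      have "invertible L" using ag unfolding affine_aut_with_def by blast
      then obtain L' where LL: "L ** L' = mat 1" "L' ** L = mat 1" unfolding invertible_def by blast
      have ag': "affine_aut_with S A g' L'" using aff_inv[OF at ag hg LL(2) LL(1)] .
      have "affine_aut_with S A (g \<circ> (\<phi> \<circ> g')) (L ** ((- mat 1) ** L'))"
        using aff_comp[OF at aff_comp[OF at ag' assms(2)] ag] .
      then have aeta: "affine_aut_with S A (g \<circ> (\<phi> \<circ> g')) (- mat 1)" using neg_conj[OF LL(1)] by simp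
      define \<eta> where "\<eta> = g \<circ> (\<phi> \<circ> g')"
      have etaC: "\<eta> \<in> CC" using aeta unfolding CC_def \<eta>_def by simp
      have gi: "\<And>x. g' (g x) = x" using hg by (auto simp: homeomorphism_def)
      have fixq: "\<eta> q = q" unfolding \<eta>_def qg using gi assms(3) by simp
      have "q \<in> K"
      proof (rule ccontr)
        assume "q \<notin> K"
        then obtain s where sS: "s \<in> S" and qN: "q \<in> N s" unfolding K_def by blast
        have ae: "affine_aut_with S A \<eta> (- mat 1)" using aeta unfolding \<eta>_def .
        have tS: "\<eta> s \<in> S" using ae sS unfolding affine_aut_with_def by blast
        have cn: "\<eta> q \<in> V (\<eta> s) \<and> \<psi> (\<eta> s) (\<eta> q) ^ k (\<eta> s) = - (\<psi> s q ^ k s)"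
          using cone[OF at ae sc[OF sS] sc[OF tS] refl \<rho>0 \<rho>r[OF sS] \<rho>r[OF tS]] qN qS
          unfolding N_def by blast
        then have eqn: "\<psi> (\<eta> s) q ^ k (\<eta> s) = - (\<psi> s q ^ k s)" using fixq by simp
        show False
        proof (cases "\<eta> s = s")
          case True
          then have "\<psi> s q ^ k s = 0" using eqn by simp
          then have "\<psi> s q = 0" by simp
          then have "q = s" using sc_inv1[OF sc[OF sS]] sc_inv0[OF sc[OF sS]] qN unfolding N_def
            by (metis (mono_tags, lifting) mem_Collect_eq)
          then show False using qS sS by simp
        next
          case False
          have "norm (\<psi> (\<eta> s) q) ^ k (\<eta> s) = norm (\<psi> s q) ^ k s"
            using eqn by (metis norm_minus_cancel norm_power)
          then have "q \<in> N (\<eta> s)" using cn fixq qN unfolding N_def by auto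
          then show False using Ndisj[OF sS tS False] qN by blast
        qed
      qed
      then show ?thesis using etaC qS fixq by blast
    qed
  qed
  have "finite (S \<union> (\<Union>\<eta>\<in>CC. K \<inter> {q. q \<notin> S \<and> \<eta> q = q}))"
    using fin finC finF by blast
  then show ?thesis unfolding periodic_point_def using orb by (rule finite_subset[rotated])
qed

end
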